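(* Let $\ell\geq 1$ be an integer and $m=2\ell+1$. Then for every $\epsilon\in\mathrm{GF}(3)^*=\{1,2\}$, the equation $$(x^{3^\ell}+\epsilon)(x^{3^\ell}-x)=1$$ has no solution $x\in\mathrm{GF}(3^m)^*$.
   Context: $\mathrm{GF}(q)$ denotes the finite field with $q$ elements and $\mathrm{GF}(q)^*=\mathrm{GF}(q)\setminus\{0\}$. *)

theory Defs
  imports Main
begin

end

theory Submission
  imports Defs
begin

lemma char3:
  fixes dummy :: "'a::{field,finite}"
  assumes "card (UNIV :: 'a set) = 3 ^ m"
  shows "(3::'a) = 0"
proof -
  have b: "bij (\<lambda>w::'a. w + 1)"
    by (rule bij_betw_byWitness[where f'="\<lambda>w. w - 1"]) auto
  have "(\<Sum>w\<in>UNIV. (w::'a) + 1) = (\<Sum>w\<in>UNIV. w)"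
    using sum.reindex[of "\<lambda>w::'a. w + 1" UNIV "\<lambda>w. w"] b
    by (simp add: bij_def)
  moreover have "(\<Sum>w\<in>UNIV. (w::'a) + 1) = (\<Sum>w\<in>UNIV. w) + of_nat (card (UNIV::'a set))"
    by (simp add: sum.distrib)
  ultimately have "(of_nat (card (UNIV::'a set)) :: 'a) = 0" by simp
  hence "(3::'a) ^ m = 0" using assms by simp
  thus ?thesis by simp
qed

lemma fermat_card:
  fixes y :: "'a::{field,finite}"
  shows "y ^ card (UNIV :: 'a set) = y"
proof (cases "y = 0")
  case True
  have "card (UNIV :: 'a set) > 0" by (simp add: card_gt_0_iff)
  thus ?thesis using True by (simp add: power_0_left)
next
  case False
  let ?S = "UNIV - {0::'a}"
  have inj: "inj_on (\<lambda>w. y * w) ?S" using False by (auto simp: inj_on_def)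
  have img: "(\<lambda>w. y * w) ` ?S = ?S"
  proof
    show "(\<lambda>w. y * w) ` ?S \<subseteq> ?S" using False by auto
    show "?S \<subseteq> (\<lambda>w. y * w) ` ?S"
    proof
      fix w assume "w \<in> ?S"
      hence "w = y * (w / y)" "w / y \<in> ?S" using False by auto
      thus "w \<in> (\<lambda>w. y * w) ` ?S" by blast
    qed
  qed
  have "(\<Prod>w\<in>?S. y * w) = (\<Prod>w\<in>?S. w)"
    using prod.reindex[OF inj, of "\<lambda>w. w"] img by simp
  moreover have "(\<Prod>w\<in>?S. y * w) = y ^ card ?S * (\<Prod>w\<in>?S. w)"
    by (simp add: prod.distrib)
  moreover have "(\<Prod>w\<in>?S. w) \<noteq> 0" by simp
  ultimately have "y ^ card ?S = 1" by simp
  moreover have "card ?S = card (UNIV::'a set) - 1" by (simp add: card_Diff_singleton)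
  moreover have "card (UNIV :: 'a set) > 0" by (simp add: card_gt_0_iff)
  ultimately show ?thesis
    by (metis Suc_diff_1 power_Suc2 mult_1_right mult.commute)
qed

lemma frob3:
  fixes a b :: "'a::field"
  assumes "(3::'a) = 0"
  shows "(a + b) ^ 3 = a ^ 3 + b ^ 3"
proof -
  have "(a + b) ^ 3 = a ^ 3 + b ^ 3 + 3 * (a^2*b + a*b^2)"
    by (simp add: power3_eq_cube power2_eq_square algebra_simps)
  thus ?thesis using assms by simp
qed

lemma frob:
  fixes a b :: "'a::field"
  assumes "(3::'a) = 0"
  shows "(a + b) ^ (3 ^ k) = a ^ (3 ^ k) + b ^ (3 ^ k)"
proof (induction k)
  case 0 thus ?case by simp
next
  case (Suc k)
  have "(a + b) ^ (3 ^ Suc k) = ((a + b) ^ (3 ^ k)) ^ 3"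
    by (simp add: power_mult[symmetric] mult.commute)
  also have "\<dots> = (a ^ (3 ^ k)) ^ 3 + (b ^ (3 ^ k)) ^ 3"
    using Suc frob3[OF assms] by simp
  also have "\<dots> = a ^ (3 ^ Suc k) + b ^ (3 ^ Suc k)"
    by (simp add: power_mult[symmetric] mult.commute)
  finally show ?case .
qed

lemma frob_diff:
  fixes a b :: "'a::field"
  assumes "(3::'a) = 0"
  shows "(a - b) ^ (3 ^ k) = a ^ (3 ^ k) - b ^ (3 ^ k)"
proof -
  have "a ^ (3 ^ k) = ((a - b) + b) ^ (3 ^ k)" by simp
  also have "\<dots> = (a - b) ^ (3 ^ k) + b ^ (3 ^ k)" by (rule frob[OF assms])
  finally show ?thesis by simp
qed

lemma fix27:
  fixes u :: "'a::field"
  assumes "u ^ 27 = u"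
  shows "u ^ (3 ^ (3 * k)) = u"
proof (induction k)
  case 0 thus ?case by simp
next
  case (Suc k)
  have "u ^ (3 ^ (3 * Suc k)) = (u ^ (3 ^ (3 * k))) ^ 27"
    by (simp add: power_mult[symmetric] power_add mult.commute)
  thus ?case using Suc assms by simp
qed

theorem lemma1:
  fixes x e :: "'a::{field,finite}" and l m :: nat
  assumes "l \<ge> 1" and "m = 2 * l + 1"
    and "card (UNIV :: 'a set) = 3 ^ m"
    and "e \<in> {1, 2}"
    and "x \<noteq> 0"
  shows "(x ^ (3 ^ l) + e) * (x ^ (3 ^ l) - x) \<noteq> 1"
proof
  assume E: "(x ^ (3 ^ l) + e) * (x ^ (3 ^ l) - x) = 1"
  have c3: "(3::'a) = 0" using char3 assms(3) by blast
  define q :: nat where "q = 3 ^ l"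
  have cardq: "card (UNIV :: 'a set) = 3 * q * q"
    using assms(2,3) by (simp add: q_def mult_2 power_add)
  have F: "\<And>y::'a. y ^ (3 * q * q) = y" using fermat_card cardq by metis
  have e3: "e ^ 3 = e"
  proof -
    have "(2::'a) ^ 3 = 2 + 2 * 3" by simp
    thus ?thesis using assms(4) c3 by auto
  qed
  have ek: "\<And>k. e ^ (3 ^ k) = e"
  proof -
    fix k show "e ^ (3 ^ k) = e"
    proof (induction k)
      case 0 thus ?case by simp
    next
      case (Suc k)
      have "e ^ (3 ^ Suc k) = (e ^ (3 ^ k)) ^ 3"
        by (simp add: power_mult[symmetric] mult.commute)
      thus ?case using Suc e3 by simp
    qed
  qed
  define u where "u = x ^ q + e"
  define z where "z = u ^ (3 ^ (l + 1))"
  have p3q: "(3::nat) ^ (l + 1) = 3 * q" by (simp add: q_def)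
  have zx: "z = x + e"
  proof -
    have "z = (x ^ q) ^ (3 ^ (l + 1)) + e ^ (3 ^ (l+1))"
      unfolding z_def u_def by (rule frob[OF c3])
    also have "(x ^ q) ^ (3 ^ (l + 1)) = x ^ (3 * q * q)"
      unfolding p3q by (simp add: power_mult[symmetric] ac_simps)
    finally show ?thesis using F ek[of "l+1"] by simp
  qed
  have A: "z * u = u ^ 2 - 1"
    using E unfolding zx u_def q_def[symmetric]
    by (simp add: algebra_simps power2_eq_square)
  have zp: "z ^ (3 ^ (l + 1)) = u ^ 3"
  proof -
    have "z ^ (3 ^ (l + 1)) = u ^ (3 * q * 3 * q)"
      unfolding z_def p3q by (simp add: power_mult[symmetric] ac_simps)
    also have "\<dots> = (u ^ (3 * q * q)) ^ 3"
      by (simp add: power_mult[symmetric] mult.commute mult.left_commute)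
    finally show ?thesis using F by simp
  qed
  have B: "u ^ 3 * z = z ^ 2 - 1"
  proof -
    have "(z * u) ^ (3 ^ (l + 1)) = u ^ 3 * z"
      unfolding power_mult_distrib zp z_def[symmetric] by simp
    moreover have "(u ^ 2 - 1) ^ (3 ^ (l + 1)) = z ^ 2 - 1"
      unfolding frob_diff[OF c3] z_def power_mult[symmetric] by (simp add: mult.commute)
    ultimately show ?thesis using A by simp
  qed
  have C: "u ^ 6 + u ^ 4 - 1 = 0"
  proof -
    have "u ^ 2 * (u ^ 3 * z) = u ^ 2 * (z ^ 2 - 1)" using B by simp
    moreover have "u ^ 2 * (u ^ 3 * z) = u ^ 4 * (z * u)" by algebra
    moreover have "u ^ 2 * (z ^ 2 - 1) = (z * u) ^ 2 - u ^ 2" by algebra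
    ultimately have "u ^ 4 * (z * u) = (z * u) ^ 2 - u ^ 2" by simp
    hence "u ^ 4 * (u ^ 2 - 1) = (u ^ 2 - 1) ^ 2 - u ^ 2" using A by simp
    hence "u ^ 6 + u ^ 4 - 1 = 3 * (u ^ 4 - u ^ 2)"
      by algebra
    thus ?thesis using c3 by simp
  qed
  have u27: "u ^ 27 = u"
  proof -
    have "u ^ 27 - u = (u^6 + u^4 - 1) *
      (u + u^5 + u^7 + u^9 + 2*u^11 + 2*u^13 + u^17 + 2*u^19 + u^21)
      - 3 * (u^15 + u^17 + u^23 + u^25)"
      by algebra
    thus ?thesis using C c3 by simp
  qed
  obtain k r where kr: "l + 1 = 3 * k + r" "r < 3"
  proof
    show "l + 1 = 3 * ((l+1) div 3) + (l+1) mod 3" by simp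
    show "(l+1) mod 3 < 3" by simp
  qed
  have zr: "z = u ^ (3 ^ r)"
  proof -
    have "z = (u ^ (3 ^ (3 * k))) ^ (3 ^ r)"
      unfolding z_def kr(1) by (simp add: power_add power_mult)
    thus ?thesis using fix27[OF u27] by simp
  qed
  have "r = 0 \<or> r = 1 \<or> r = 2" using kr(2) by auto
  moreover
  { assume "r = 0"
    hence "z = u" using zr by simp
    hence False using A by (simp add: power2_eq_square) }
  moreover
  { assume "r = 1"
    hence "z = u ^ 3" using zr by simp
    hence A1: "u ^ 4 = u ^ 2 - 1" using A by algebra
    have "u ^ 2 = 3" using A1 C by algebra
    hence "u = 0" using c3 by simp
    hence False using A by simp }
  moreover
  { assume "r = 2"
    hence "z = u ^ 9" using zr by simp
    hence A2: "u ^ 10 - u ^ 2 + 1 = 0" using A by algebra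
    have "(1 + u^2 + 2*u^4) * (u ^ 10 - u ^ 2 + 1) + (u^4 + u^6 + u^8) * (u^6 + u^4 - 1)
          = 1 + 3 * (u^10 + u^12 + u^14 - u^6)"
      by algebra
    hence False using A2 C c3 by simp }
  ultimately show False by blast
qed

end
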